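(* If $H\in(\frac12,1)$ then $$\lim_{s\downarrow0}s^{H-\frac12}K^0_H(1,s)=\frac{c_2(H)}{2}\quad\text{and}\quad\lim_{t\to\infty}t^{1-2H}K^0_H(t,s)=\frac{c_2(H)}2s^{\frac12-H}\ \ (s>0).$$ If $H\in(0,\frac12)$ then $$\lim_{s\downarrow0}s^{\frac12-H}K^0_H(1,s)=\frac{H}{c_2(H)}\quad\text{and}\quad\lim_{t\to\infty}K^0_H(t,s)=\frac{H}{c_2(H)}s^{H-\frac12}\ \ (s>0).$$
   Context: Let $c_2(H)=\big(\frac{2H\Gamma(\frac32-H)}{\Gamma(H+\frac12)\Gamma(2-2H)}\big)^{1/2}$. For $H\in(0,1)\setminus\{\frac12\}$ and $t>s>0$, $$K^0_H(t,s)=c_2(H)\Big[\big(\tfrac ts\big)^{H-\frac12}(t-s)^{H-\frac12}-\big(H-\tfrac12\big)s^{\frac12-H}\int_s^tu^{H-\frac32}(u-s)^{H-\frac12}du\Big],$$ which for $H>\frac12$ equals $(H-\frac12)c_2(H)s^{\frac12-H}\int_s^tu^{H-\frac12}(u-s)^{H-\frac32}du$. *)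

theory Defs
  imports "HOL-Analysis.Analysis"
begin

definition c2 :: "real \<Rightarrow> real" where
  "c2 H = sqrt (2 * H * Gamma (3/2 - H) / (Gamma (H + 1/2) * Gamma (2 - 2*H)))"

text \<open>The kernel K^0_H(t,s) for t > s > 0, H in (0,1) minus {1/2}; the integral is the
  (absolutely convergent) Henstock-Kurzweil integral over [s,t].\<close>
definition K0 :: "real \<Rightarrow> real \<Rightarrow> real \<Rightarrow> real" where
  "K0 H t s = c2 H * ((t / s) powr (H - 1/2) * (t - s) powr (H - 1/2)
     - (H - 1/2) * s powr (1/2 - H) *
       integral {s..t} (\<lambda>u. u powr (H - 3/2) * (u - s) powr (H - 1/2)))"

end

theory Submission
  imports Defs "HOL-Real_Asymp.Real_Asymp"
begin


lemma powr_shift_int: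
  fixes s t a :: real
  assumes "0 < s" "s \<le> t" "-1 < a"
  shows "((\<lambda>u. (u-s) powr a) has_integral ((t-s) powr (a+1)/(a+1))) {s..t}"
proof -
  define F where "F = (\<lambda>u. (u-s) powr (a+1)/(a+1))"
  have "((\<lambda>u. (u-s) powr a) has_integral (F t - F s)) {s..t}"
  proof (rule fundamental_theorem_of_calculus_interior)
    show "continuous_on {s..t} F"
      unfolding F_def using assms by (intro continuous_on_divide continuous_on_powr' continuous_intros) auto
    fix x assume x: "x \<in> {s<..<t}"
    show "(F has_vector_derivative (x - s) powr a) (at x)"
      unfolding has_real_derivative_iff_has_vector_derivative[symmetric] F_def
      using x assms by (auto intro!: derivative_eq_intros)
  qed (use assms in auto)
  then show ?thesis using assms by (simp add: F_def)
qed

lemma kern_integrable: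
  fixes s t a :: real
  assumes "0 < s" "s \<le> t" "-1 < a" "a < 1"
  shows "(\<lambda>u. u powr (a-1) * (u-s) powr a) integrable_on {s..t}"
proof (rule measurable_bounded_by_integrable_imp_integrable_real)
  show "(\<lambda>u::real. u powr (a-1) * (u-s) powr a) \<in> borel_measurable (lebesgue_on {s..t})"
    by (intro measurable_restrict_space1 measurable_completion) measurable
  show "(\<lambda>u. s powr (a-1) * (u-s) powr a) integrable_on {s..t}"
    using has_integral_mult_right[OF powr_shift_int[OF assms(1-3)], of "s powr (a-1)"] by (auto simp: integrable_on_def)
  fix u assume u: "u \<in> {s..t}"
  have "u powr (a-1) \<le> s powr (a-1)" using u assms by (intro powr_mono2') auto
  then show "\<bar>u powr (a-1) * (u-s) powr a\<bar> \<le> s powr (a-1) * (u-s) powr a"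
    by (simp add: abs_mult mult_right_mono)
qed auto



lemma pt_id:
  fixes s v a :: real
  assumes "0 < s" "s < v"
  shows "- (s / v^2) * ((s/v) powr (-2*a - 1) * (1 - s/v) powr a)
         = - (s powr (-2*a)) * (v powr (a-1) * (v - s) powr a)"
proof -
  have v: "v > 0" using assms by auto
  have e1: "1 - s/v = (v-s)/v" using v by (simp add: field_simps)
  have h4: "v powr (2*a) = v powr a * v powr a" using v by (simp add: powr_add[symmetric])
  have h1: "(s/v) powr (-2*a - 1) = s powr (-2*a) / s * (v powr a * v powr a * v)"
    using assms v h4 by (simp add: powr_divide powr_diff powr_minus field_simps)
  have h2: "((v-s)/v) powr a = (v-s) powr a / v powr a"
    using assms v by (simp add: powr_divide)
  have h3: "v powr (a-1) = v powr a / v" using v by (simp add: powr_diff)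
  have "v powr a > 0" using v by simp
  then show ?thesis using assms v unfolding e1 h1 h2 h3
    by (simp add: field_simps power2_eq_square)
qed


lemma subst_part:
  fixes s p t a :: real
  assumes "0 < s" "s < p" "p < t"
  shows "((\<lambda>v. v powr (a-1) * (v-s) powr a) has_integral
          (s powr (2*a) * integral {s/t..s/p} (\<lambda>w. w powr (-2*a - 1) * (1-w) powr a))) {p..t}"
proof -
  define G where "G = (\<lambda>w::real. w powr (-2*a - 1) * (1-w) powr a)"
  have st: "s/t < s/p" using assms by (simp add: divide_strict_left_mono)
  have sp1: "s/p < 1" using assms by simp
  have st0: "0 < s/t" using assms by simp
  have "((\<lambda>x. (- (s/x^2)) *\<^sub>R G (s/x)) has_integral
          (integral {s/p..s/t} G - integral {s/t..s/p} G)) {p..t}"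
  proof (rule has_integral_substitution_general[of "{}" p t "\<lambda>v. s/v" "s/t" "s/p" G])
    show "(\<lambda>v. s / v) ` {p..t} \<subseteq> {s / t..s / p}"
      using assms by (auto intro!: divide_left_mono mult_pos_pos)
    show "continuous_on {s / t..s / p} G"
      unfolding G_def using st0 sp1
      by (intro continuous_intros) auto
    show "continuous_on {p..t} (\<lambda>v. s / v)" using assms by (intro continuous_intros) auto
    fix x assume x: "x \<in> {p..t} - {}"
    show "((\<lambda>v. s / v) has_real_derivative - (s / x\<^sup>2)) (at x within {p..t})"
      using x assms by (auto intro!: derivative_eq_intros simp: power2_eq_square)
  qed (use assms in auto)
  moreover have "integral {s/p..s/t} G = 0" using st by simp
  ultimately have "((\<lambda>x. - (s/x^2) * G (s/x)) has_integral (- integral {s/t..s/p} G)) {p..t}"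
    by simp
  then have "((\<lambda>x. - (s/x^2) * G (s/x)) has_integral (- integral {s/t..s/p} G)) {p..t}"
    by simp
  hence "((\<lambda>x. - (s powr (-2*a)) * (x powr (a-1) * (x - s) powr a)) has_integral (- integral {s/t..s/p} G)) {p..t}"
  proof (rule has_integral_eq[rotated])
    fix x assume "x \<in> {p..t}"
    then show "- (s/x^2) * G (s/x) = - (s powr (-2*a)) * (x powr (a-1) * (x - s) powr a)"
      unfolding G_def using pt_id[of s x a] assms by auto
  qed
  from has_integral_mult_right[OF this, of "- (s powr (2*a))"]
  have "((\<lambda>x. (s powr (2*a) * s powr (-2*a)) * (x powr (a-1) * (x - s) powr a)) has_integral
         (s powr (2*a) * integral {s/t..s/p} G)) {p..t}"
    by (simp add: algebra_simps)
  moreover have "s powr (2*a) * s powr (-2*a) = 1" using assms by (simp add: powr_add[symmetric])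
  ultimately show ?thesis unfolding G_def by simp
qed



lemma G_beta:
  fixes a :: real
  assumes "-1/2 < a" "a < 0"
  shows "((\<lambda>w. w powr (-2*a - 1) * (1-w) powr a) has_integral Beta (-2*a) (a+1)) {0..1}"
  using has_integral_Beta_real[of "-2*a" "a+1"] assms by simp

lemma I_beta:
  fixes s t a :: real
  assumes "0 < s" "s < t" "-1/2 < a" "a < 0"
  shows "integral {s..t} (\<lambda>v. v powr (a-1) * (v-s) powr a) =
         s powr (2*a) * integral {s/t..1} (\<lambda>w. w powr (-2*a - 1) * (1-w) powr a)"
proof -
  define f where "f = (\<lambda>v::real. v powr (a-1) * (v-s) powr a)"
  define G where "G = (\<lambda>w::real. w powr (-2*a - 1) * (1-w) powr a)"
  have Gi: "G integrable_on {0..1}" using G_beta[OF assms(3,4)] unfolding G_def by blast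
  have st0: "0 < s/t" "s/t < 1" using assms by auto
  have Gi': "G integrable_on {s/t..1}" by (rule integrable_on_subinterval[OF Gi]) (use st0 in auto)
  have fi: "f integrable_on {s..t}" unfolding f_def
    by (rule kern_integrable) (use assms in auto)
  have c1: "continuous_on {s..t} (\<lambda>p. integral {p..t} f)"
    by (rule indefinite_integral_continuous_1'[OF fi])
  have c2: "continuous_on {s..t} (\<lambda>p. s powr (2*a) * integral {s/t..s/p} G)"
  proof (intro continuous_on_mult continuous_on_const)
    show "continuous_on {s..t} (\<lambda>p. integral {s/t..s/p} G)"
    proof (rule continuous_on_compose2[OF indefinite_integral_continuous_1[OF Gi']])
      show "continuous_on {s..t} (\<lambda>p. s/p)" using assms by (intro continuous_intros) auto
      show "(\<lambda>p. s/p) ` {s..t} \<subseteq> {s/t..1}"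
        using assms by (auto intro!: divide_left_mono mult_pos_pos)
    qed
  qed
  have l1: "((\<lambda>p. integral {p..t} f) \<longlongrightarrow> integral {s..t} f) (at_right s)"
    using c1 assms unfolding continuous_on_def by (metis at_within_Icc_at_right atLeastAtMost_iff order_refl less_imp_le)
  have l2: "((\<lambda>p. s powr (2*a) * integral {s/t..s/p} G) \<longlongrightarrow> s powr (2*a) * integral {s/t..1} G) (at_right s)"
    using c2 assms unfolding continuous_on_def
    by (metis (no_types, lifting) at_within_Icc_at_right atLeastAtMost_iff order_refl less_imp_le divide_self less_irrefl)
  have ev: "\<forall>\<^sub>F p in at_right s. s powr (2*a) * integral {s/t..s/p} G = integral {p..t} f"
    unfolding eventually_at_right_field
  proof (rule exI[of _ t], intro conjI allI impI)
    fix p assume "s < p" "p < t"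
    then show "s powr (2*a) * integral {s/t..s/p} G = integral {p..t} f"
      using subst_part[of s p t a] assms unfolding f_def G_def by (simp add: integral_unique)
  qed (use assms in auto)
  have "((\<lambda>p. integral {p..t} f) \<longlongrightarrow> s powr (2*a) * integral {s/t..1} G) (at_right s)"
    by (rule Lim_transform_eventually[OF l2 ev])
  from tendsto_unique[OF trivial_limit_at_right_real l1 this]
  show ?thesis unfolding f_def G_def .
qed


lemma powr_int:
  fixes s t e :: real
  assumes "0 < s" "s \<le> t" "e \<noteq> -1"
  shows "((\<lambda>u. u powr e) has_integral ((t powr (e+1) - s powr (e+1))/(e+1))) {s..t}"
proof -
  define F where "F = (\<lambda>u::real. u powr (e+1)/(e+1))"
  have "((\<lambda>u. u powr e) has_integral (F t - F s)) {s..t}"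
  proof (rule fundamental_theorem_of_calculus_interior)
    show "continuous_on {s..t} F"
      unfolding F_def using assms by (intro continuous_intros) auto
    fix x assume x: "x \<in> {s<..<t}"
    show "(F has_vector_derivative x powr e) (at x)"
      unfolding has_real_derivative_iff_has_vector_derivative[symmetric] F_def
      using x assms by (auto intro!: derivative_eq_intros)
  qed (use assms in auto)
  then show ?thesis by (simp add: F_def diff_divide_distrib)
qed

lemma kern_bounds:
  fixes s t a :: real
  assumes "0 < s" "s \<le> t" "0 < a" "a < 1/2"
  shows "integral {s..t} (\<lambda>u. u powr (a-1) * (u-s) powr a) \<le> (t powr (2*a) - s powr (2*a))/(2*a)"
    and "(t powr (2*a) - s powr (2*a))/(2*a) - s*((t powr (2*a-1) - s powr (2*a-1))/(2*a-1))
          \<le> integral {s..t} (\<lambda>u. u powr (a-1) * (u-s) powr a)"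
proof -
  have fi: "(\<lambda>u. u powr (a-1) * (u-s) powr a) integrable_on {s..t}"
    by (rule kern_integrable) (use assms in auto)
  have i1: "((\<lambda>u. u powr (2*a-1)) has_integral (t powr (2*a) - s powr (2*a))/(2*a)) {s..t}"
    using powr_int[of s t "2*a-1"] assms by simp
  have i2: "((\<lambda>u. u powr (2*a-1) - s * u powr (2*a-2)) has_integral
     (t powr (2*a) - s powr (2*a))/(2*a) - s*((t powr (2*a-1) - s powr (2*a-1))/(2*a-1))) {s..t}"
    using has_integral_diff[OF i1 has_integral_mult_right[OF powr_int[of s t "2*a-2"]], of s] assms
    by simp
  show "integral {s..t} (\<lambda>u. u powr (a-1) * (u-s) powr a) \<le> (t powr (2*a) - s powr (2*a))/(2*a)"
  proof (rule has_integral_le[OF integrable_integral[OF fi] i1])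
    fix u assume u: "u \<in> {s..t}"
    have "(u-s) powr a \<le> u powr a" using u assms by (intro powr_mono2) auto
    hence "u powr (a-1) * (u-s) powr a \<le> u powr (a-1) * u powr a" by (intro mult_left_mono) auto
    also have "\<dots> = u powr (2*a-1)" using u assms by (simp add: powr_add[symmetric])
    finally show "u powr (a-1) * (u-s) powr a \<le> u powr (2*a-1)" .
  qed
  show "(t powr (2*a) - s powr (2*a))/(2*a) - s*((t powr (2*a-1) - s powr (2*a-1))/(2*a-1))
          \<le> integral {s..t} (\<lambda>u. u powr (a-1) * (u-s) powr a)"
  proof (rule has_integral_le[OF i2 integrable_integral[OF fi]])
    fix u assume u: "u \<in> {s..t}"
    have eq: "u powr (2*a-1) - s * u powr (2*a-2) = u powr (a-1) * ((u-s) * u powr (a-1))"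
    proof -
      have u0: "u > 0" using u assms by auto
      have "u powr (2*a-1) = u powr (a-1) * (u * u powr (a-1))"
        using u0 by (simp add: powr_add[symmetric] powr_mult_base)
      moreover have "u powr (2*a-2) = u powr (a-1) * u powr (a-1)"
        using u0 by (simp add: powr_add[symmetric])
      ultimately show ?thesis by (simp add: algebra_simps)
    qed
    show "u powr (2*a-1) - s * u powr (2*a-2) \<le> u powr (a-1) * (u-s) powr a"
    proof (cases "u = s")
      case True then show ?thesis unfolding eq by simp
    next
      case False
      with u have us: "s < u" by auto
      have "u powr (a-1) \<le> (u-s) powr (a-1)" using us assms by (intro powr_mono2') auto
      hence "(u-s) * u powr (a-1) \<le> (u-s) * (u-s) powr (a-1)" using us by (intro mult_left_mono) auto
      also have "\<dots> = (u-s) powr a" using us by (simp add: powr_add[symmetric] powr_mult_base)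
      finally show ?thesis unfolding eq by (intro mult_left_mono) auto
    qed
  qed
qed


lemma c2_pos: "0 < H \<Longrightarrow> H < 1 \<Longrightarrow> c2 H > 0"
  unfolding c2_def by (intro real_sqrt_gt_zero divide_pos_pos mult_pos_pos Gamma_real_pos) auto

lemma const_id:
  assumes "0 < H" "H < 1/2"
  shows "c2 H * (- (H - 1/2) * Beta (-2*(H-1/2)) (H - 1/2 + 1)) = H / c2 H"
proof -
  have g1: "Gamma (1 - 2*H) > 0" "Gamma (H + 1/2) > 0" "Gamma (3/2 - H) > 0"
    using assms by (auto intro!: Gamma_real_pos)
  have g2: "Gamma (2 - 2*H) = (1 - 2*H) * Gamma (1 - 2*H)"
  proof -
    have "1 - 2*H \<notin> \<int>\<^sub>\<le>\<^sub>0" using assms by (auto dest: nonpos_Ints_nonpos)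
    then show ?thesis using Gamma_plus1[of "1 - 2*H"] by (simp add: algebra_simps)
  qed
  have B: "Beta (-2*(H-1/2)) (H - 1/2 + 1) = Gamma (1 - 2*H) * Gamma (H + 1/2) / Gamma (3/2 - H)"
    unfolding Beta_def by (simp add: algebra_simps)
  have c: "(c2 H)^2 = 2 * H * Gamma (3/2 - H) / (Gamma (H + 1/2) * Gamma (2 - 2*H))"
    unfolding c2_def using assms g1 g2 by (subst real_sqrt_pow2) (auto intro!: divide_nonneg_pos mult_pos_pos)
  have cp: "c2 H > 0" using c2_pos assms by auto
  define A where "A = Gamma (1 - 2*H)"
  define Bg where "Bg = Gamma (H + 1/2)"
  define C where "C = Gamma (3/2 - H)"
  have pos: "A > 0" "Bg > 0" "C > 0" "1 - 2*H > 0" using g1 assms unfolding A_def Bg_def C_def by auto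
  have "c2 H * (c2 H * (- (H - 1/2) * Beta (-2*(H-1/2)) (H - 1/2 + 1)))
        = (c2 H)^2 * ((1/2 - H) * A * Bg / C)"
    unfolding B A_def Bg_def C_def by (simp add: power2_eq_square algebra_simps)
  also have "\<dots> = 2 * H * C / (Bg * ((1 - 2*H) * A)) * ((1/2 - H) * A * Bg / C)"
    unfolding c g2 A_def Bg_def C_def ..
  also have "\<dots> = H" using pos by (simp add: field_simps)
  finally have "c2 H * (c2 H * (- (H - 1/2) * Beta (-2*(H-1/2)) (H - 1/2 + 1))) = H" .
  then show ?thesis using cp by (simp add: field_simps)
qed


lemma case1:
  assumes "1/2 < H" "H < 1"
  shows "((\<lambda>s. s powr (H - 1/2) * K0 H 1 s) \<longlongrightarrow> c2 H / 2) (at_right 0)"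
proof -
  define J where "J s = integral {s..1} (\<lambda>u. u powr (H - 3/2) * (u-s) powr (H-1/2))" for s
  define P where "P s = s powr (H-1/2) * ((1/s) powr (H-1/2) * (1-s) powr (H-1/2))" for s :: real
  define Q where "Q s = (H-1/2) * (s powr (H-1/2) * s powr (1/2-H))" for s :: real
  define U where "U s = (1 powr (2*(H-1/2)) - s powr (2*(H-1/2)))/(2*(H-1/2))" for s :: real
  define L where "L s = U s - s*((1 powr (2*(H-1/2)-1) - s powr (2*(H-1/2)-1))/(2*(H-1/2)-1))" for s :: real
  have eq: "s powr (H-1/2) * K0 H 1 s = c2 H * (P s - Q s * J s)" for s
    unfolding K0_def P_def Q_def J_def by (simp add: algebra_simps)
  have ex: "H - 1/2 - 1 = H - 3/2" by simp
  have bnd: "P s - Q s * U s \<le> P s - Q s * J s \<and> P s - Q s * J s \<le> P s - Q s * L s"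
    if s: "0 < s" "s < 1" for s
  proof -
    have "J s \<le> U s" "L s \<le> J s"
      using kern_bounds[of s 1 "H - 1/2"] s assms unfolding J_def U_def L_def ex by auto
    moreover have "Q s \<ge> 0" unfolding Q_def using assms by auto
    ultimately show ?thesis by (auto intro: mult_left_mono)
  qed
  have ev1: "\<forall>\<^sub>F s in at_right 0. P s - Q s * U s \<le> P s - Q s * J s"
    and ev2: "\<forall>\<^sub>F s in at_right 0. P s - Q s * J s \<le> P s - Q s * L s"
    using bnd unfolding eventually_at_right_field by (auto intro!: exI[of _ 1])
  have v: "1 - (H - 1/2) * inverse (2 * H - 1) = 1/2" using assms by (simp add: field_simps)
  have "((\<lambda>s. P s - Q s * U s) \<longlongrightarrow> 1 - (H - 1/2) * inverse (2 * H - 1)) (at_right 0)"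
    unfolding P_def Q_def U_def using assms by real_asymp
  then have l1: "((\<lambda>s. P s - Q s * U s) \<longlongrightarrow> 1/2) (at_right 0)" unfolding v .
  have "((\<lambda>s. P s - Q s * L s) \<longlongrightarrow> 1 - (H - 1/2) * inverse (2 * H - 1)) (at_right 0)"
    unfolding P_def Q_def U_def L_def using assms by real_asymp
  then have l2: "((\<lambda>s. P s - Q s * L s) \<longlongrightarrow> 1/2) (at_right 0)" unfolding v .
  have "((\<lambda>s. P s - Q s * J s) \<longlongrightarrow> 1/2) (at_right 0)"
    by (rule tendsto_sandwich[OF ev1 ev2 l1 l2])
  from tendsto_mult[OF tendsto_const[of "c2 H"] this]
  show ?thesis unfolding eq by simp
qed


lemma case2:
  assumes "1/2 < H" "H < 1" "0 < s"
  shows "((\<lambda>t. t powr (1 - 2*H) * K0 H t s) \<longlongrightarrow> c2 H / 2 * s powr (1/2 - H)) at_top"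
proof -
  define J where "J t = integral {s..t} (\<lambda>u. u powr (H - 3/2) * (u-s) powr (H-1/2))" for t
  define P where "P t = t powr (1-2*H) * ((t/s) powr (H-1/2) * (t-s) powr (H-1/2))" for t :: real
  define Q where "Q t = (H-1/2) * (t powr (1-2*H) * s powr (1/2-H))" for t :: real
  define U where "U t = (t powr (2*(H-1/2)) - s powr (2*(H-1/2)))/(2*(H-1/2))" for t :: real
  define L where "L t = U t - s*((t powr (2*(H-1/2)-1) - s powr (2*(H-1/2)-1))/(2*(H-1/2)-1))" for t :: real
  have eq: "t powr (1-2*H) * K0 H t s = c2 H * (P t - Q t * J t)" for t
    unfolding K0_def P_def Q_def J_def by (simp add: algebra_simps)
  have ex: "H - 1/2 - 1 = H - 3/2" by simp
  have bnd: "P t - Q t * U t \<le> P t - Q t * J t \<and> P t - Q t * J t \<le> P t - Q t * L t"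
    if t: "s < t" for t
  proof -
    have "J t \<le> U t" "L t \<le> J t"
      using kern_bounds[of s t "H - 1/2"] t assms unfolding J_def U_def L_def ex by auto
    moreover have "Q t \<ge> 0" unfolding Q_def using assms by auto
    ultimately show ?thesis by (auto intro: mult_left_mono)
  qed
  have ev1: "\<forall>\<^sub>F t in at_top. P t - Q t * U t \<le> P t - Q t * J t"
    and ev2: "\<forall>\<^sub>F t in at_top. P t - Q t * J t \<le> P t - Q t * L t"
    using eventually_gt_at_top[of s] by (eventually_elim, use bnd in blast)+
  have si: "inverse s powr (H - 1/2) = s powr (1/2 - H)"
    unfolding inverse_powr powr_minus[symmetric] by simp
  have v: "inverse s powr (H - 1 / 2) - (H - 1 / 2) * s powr (1 / 2 - H) * inverse (2 * H - 1)
      = s powr (1/2 - H) / 2" unfolding si using assms by (simp add: field_simps)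
  have "((\<lambda>t. P t - Q t * U t) \<longlongrightarrow> inverse s powr (H - 1 / 2) - (H - 1 / 2) * s powr (1 / 2 - H) * inverse (2 * H - 1)) at_top"
    unfolding P_def Q_def U_def using assms by real_asymp
  then have l1: "((\<lambda>t. P t - Q t * U t) \<longlongrightarrow> s powr (1/2 - H) / 2) at_top" unfolding v .
  have "((\<lambda>t. P t - Q t * L t) \<longlongrightarrow> inverse s powr (H - 1 / 2) - (H - 1 / 2) * s powr (1 / 2 - H) * inverse (2 * H - 1)) at_top"
    unfolding P_def Q_def U_def L_def using assms by real_asymp
  then have l2: "((\<lambda>t. P t - Q t * L t) \<longlongrightarrow> s powr (1/2 - H) / 2) at_top" unfolding v .
  have "((\<lambda>t. P t - Q t * J t) \<longlongrightarrow> s powr (1/2 - H) / 2) at_top"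
    by (rule tendsto_sandwich[OF ev1 ev2 l1 l2])
  from tendsto_mult[OF tendsto_const[of "c2 H"] this]
  show ?thesis unfolding eq by simp
qed



lemma Qf_lim:
  fixes H :: real
  assumes "0 < H" "H < 1/2"
  shows "((\<lambda>x. integral {x..1} (\<lambda>w. w powr (-2*(H-1/2) - 1) * (1-w) powr (H-1/2)))
          \<longlongrightarrow> Beta (-2*(H-1/2)) (H-1/2+1)) (at_right 0)"
proof -
  have hi: "((\<lambda>w. w powr (-2*(H-1/2) - 1) * (1-w) powr (H-1/2)) has_integral Beta (-2*(H-1/2)) (H-1/2+1)) {0..1}"
    by (rule G_beta) (use assms in auto)
  have c: "continuous_on {0..1} (\<lambda>x. integral {x..1} (\<lambda>w. w powr (-2*(H-1/2) - 1) * (1-w) powr (H-1/2)))"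
    by (rule indefinite_integral_continuous_1') (use hi in blast)
  have "((\<lambda>x. integral {x..1} (\<lambda>w. w powr (-2*(H-1/2) - 1) * (1-w) powr (H-1/2)))
          \<longlongrightarrow> integral {0..1} (\<lambda>w. w powr (-2*(H-1/2) - 1) * (1-w) powr (H-1/2))) (at_right 0)"
  proof -
    have "(0::real) \<in> {0..1}" by simp
    with c have "((\<lambda>x. integral {x..1} (\<lambda>w. w powr (-2*(H-1/2) - 1) * (1-w) powr (H-1/2)))
          \<longlongrightarrow> integral {0..1} (\<lambda>w. w powr (-2*(H-1/2) - 1) * (1-w) powr (H-1/2))) (at 0 within {0..1})"
      unfolding continuous_on_def by blast
    moreover have "at (0::real) within {0..1} = at_right 0" by (rule at_within_Icc_at_right) simp
    ultimately show ?thesis by simp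
  qed
  then show ?thesis using integral_unique[OF hi] by simp
qed

lemma arr3: "(c::real) * (x * y - a * (x * x * z) * q) = x * (c * (y - a * x * (z * q)))"
  by (simp add: algebra_simps)

lemma arr4: "(c::real) * (p - a * (x * z) * q) = c * (p - a * x * (z * q))"
  by (simp add: algebra_simps)

lemma case3:
  assumes "0 < H" "H < 1/2"
  shows "((\<lambda>s. s powr (1/2 - H) * K0 H 1 s) \<longlongrightarrow> H / c2 H) (at_right 0)"
proof -
  define Qf where "Qf x = integral {x..1} (\<lambda>w. w powr (-2*(H-1/2) - 1) * (1-w) powr (H-1/2))" for x
  define Bv where "Bv = Beta (-2*(H-1/2)) (H-1/2+1)"
  define P where "P s = s powr (1/2-H) * ((1/s) powr (H-1/2) * (1-s) powr (H-1/2))" for s :: real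
  define R where "R s = s powr (1/2-H) * s powr (1/2-H) * s powr (2*(H-1/2))" for s :: real
  have ex: "H - 1/2 - 1 = H - 3/2" by simp
  have p: "-1/2 < H - 1/2" "H - 1/2 < (0::real)" using assms by auto
  have ev: "\<forall>\<^sub>F s in at_right 0. c2 H * (P s - (H-1/2) * R s * Qf s) = s powr (1/2 - H) * K0 H 1 s"
    unfolding eventually_at_right_field
  proof (rule exI[of _ 1], intro conjI allI impI)
    fix s :: real assume s: "0 < s" "s < 1"
    from I_beta[OF s(1) s(2) p(1) p(2)] have e: "integral {s..1} (\<lambda>v. v powr (H - 3/2) * (v-s) powr (H-1/2)) = s powr (2*(H-1/2)) * Qf s"
      unfolding ex div_by_1 Qf_def .
    show "c2 H * (P s - (H-1/2) * R s * Qf s) = s powr (1/2 - H) * K0 H 1 s"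
      unfolding K0_def P_def R_def e by (rule arr3)
  qed simp
  have lP: "(P \<longlongrightarrow> 0) (at_right 0)" unfolding P_def using assms by real_asymp
  have lR: "(R \<longlongrightarrow> 1) (at_right 0)" unfolding R_def using assms by real_asymp
  have lQ: "(Qf \<longlongrightarrow> Bv) (at_right 0)" unfolding Qf_def Bv_def by (rule Qf_lim[OF assms])
  have "((\<lambda>s. c2 H * (P s - (H-1/2) * R s * Qf s)) \<longlongrightarrow> c2 H * (0 - (H-1/2) * 1 * Bv)) (at_right 0)"
    by (intro tendsto_intros lP lR lQ)
  moreover have "c2 H * (0 - (H-1/2) * 1 * Bv) = H / c2 H"
  proof -
    have k: "c2 H * (- (H-1/2) * Bv) = H / c2 H" unfolding Bv_def by (rule const_id[OF assms])
    have "c2 H * (0 - (H-1/2) * 1 * Bv) = c2 H * (- (H-1/2) * Bv)" by (simp add: algebra_simps)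
    then show ?thesis using k by simp
  qed
  ultimately have "((\<lambda>x. c2 H * (P x - (H-1/2) * R x * Qf x)) \<longlongrightarrow> H / c2 H) (at_right 0)"
    by (simp only:)
  from Lim_transform_eventually[OF this ev] show ?thesis .
qed

lemma case4:
  assumes "0 < H" "H < 1/2" "0 < s"
  shows "((\<lambda>t. K0 H t s) \<longlongrightarrow> H / c2 H * s powr (H - 1/2)) at_top"
proof -
  define Qf where "Qf x = integral {x..1} (\<lambda>w. w powr (-2*(H-1/2) - 1) * (1-w) powr (H-1/2))" for x
  define Bv where "Bv = Beta (-2*(H-1/2)) (H-1/2+1)"
  define P where "P t = (t/s) powr (H-1/2) * (t-s) powr (H-1/2)" for t :: real
  define S where "S = s powr (1/2-H) * s powr (2*(H-1/2))"
  have ex: "H - 1/2 - 1 = H - 3/2" by simp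
  have p: "-1/2 < H - 1/2" "H - 1/2 < (0::real)" using assms by auto
  have ev: "\<forall>\<^sub>F t in at_top. c2 H * (P t - (H-1/2) * S * Qf (s/t)) = K0 H t s"
    using eventually_gt_at_top[of s]
  proof eventually_elim
    fix t assume t: "s < t"
    from I_beta[OF assms(3) t p(1) p(2)] have e: "integral {s..t} (\<lambda>v. v powr (H - 3/2) * (v-s) powr (H-1/2)) = s powr (2*(H-1/2)) * Qf (s/t)"
      unfolding ex Qf_def .
    show "c2 H * (P t - (H-1/2) * S * Qf (s/t)) = K0 H t s"
      unfolding K0_def P_def S_def e by (rule arr4)
  qed
  have lP: "(P \<longlongrightarrow> 0) at_top" unfolding P_def using assms by real_asymp
  have fl: "filterlim (\<lambda>t. s/t) (at_right 0) at_top" using assms by real_asymp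
  have lQ: "((\<lambda>t. Qf (s/t)) \<longlongrightarrow> Bv) at_top"
    using filterlim_compose[OF Qf_lim[OF assms(1,2)] fl] unfolding Qf_def Bv_def .
  have "((\<lambda>t. c2 H * (P t - (H-1/2) * S * Qf (s/t))) \<longlongrightarrow> c2 H * (0 - (H-1/2) * S * Bv)) at_top"
    by (intro tendsto_intros lP lQ)
  moreover have "c2 H * (0 - (H-1/2) * S * Bv) = H / c2 H * s powr (H - 1/2)"
  proof -
    have "S = s powr (H - 1/2)" unfolding S_def using assms by (simp add: powr_add[symmetric])
    moreover have k: "c2 H * (- (H-1/2) * Bv) = H / c2 H" unfolding Bv_def by (rule const_id[OF assms(1,2)])
    moreover have "c2 H * (0 - (H-1/2) * S * Bv) = S * (c2 H * (- (H-1/2) * Bv))" by (simp add: algebra_simps)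
    ultimately show ?thesis by simp
  qed
  ultimately have "((\<lambda>t. c2 H * (P t - (H-1/2) * S * Qf (s/t))) \<longlongrightarrow> H / c2 H * s powr (H - 1/2)) at_top"
    by (simp only:)
  from Lim_transform_eventually[OF this ev] show ?thesis .
qed


theorem lemma6p7:
  fixes H :: real
  shows "(1/2 < H \<and> H < 1 \<longrightarrow>
           ((\<lambda>s. s powr (H - 1/2) * K0 H 1 s) \<longlongrightarrow> c2 H / 2) (at_right 0) \<and>
           (\<forall>s>0. ((\<lambda>t. t powr (1 - 2*H) * K0 H t s) \<longlongrightarrow> c2 H / 2 * s powr (1/2 - H)) at_top))
       \<and> (0 < H \<and> H < 1/2 \<longrightarrow>
           ((\<lambda>s. s powr (1/2 - H) * K0 H 1 s) \<longlongrightarrow> H / c2 H) (at_right 0) \<and>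
           (\<forall>s>0. ((\<lambda>t. K0 H t s) \<longlongrightarrow> H / c2 H * s powr (H - 1/2)) at_top))"
  using case1 case2 case3 case4 by blast

end
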